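(* Consider the augmented Lagrange algorithm described in the context, and assume that in step (1) the pair $(\bar y_k,\bar u_k)$ is always chosen to be a global minimizer of the augmented Lagrange sub-problem with parameters $\mu_k,\rho_k$ (together with its adjoint state). Assume that only finitely many steps of the algorithm are successful. Then $\frac1{\rho_k}\|(\mu_k+\rho_k(\bar y_k-\psi))_+\|^2_{L^2(\Omega)}$ is uniformly bounded in $k$.
   Context: Setting. Let $\Omega\subset\mathbb{R}^N$, $N\in\{2,3\}$, be a bounded domain with $C^{1,1}$ boundary $\Gamma$, or a bounded convex domain with polygonal boundary $\Gamma$. Let $y_d\in L^2(\Omega)$, $\psi\in C(\bar\Omega)$, $\alpha>0$, $u_a,u_b\in L^\infty(\Omega)$ with $u_a\le u_b$, $U_{ad}=\{u\in L^\infty(\Omega): u_a\le u\le u_b\text{ a.e.}\}$. Let $Ay=-\sum_{i,j=1}^N\partial_{x_j}(a_{ij}\partial_{x_i}y)+a_0y$ with $a_{ij}\in C^{0,1}(\bar\Omega)$, $a_0\in L^\infty(\Omega)$, $a_0\ge0$ a.e., $a_0\not\equiv0$, uniformly elliptic with constant $\delta>0$; $\partial_{\nu_A}y=\sum a_{ij}\partial_{x_i}y\,\nu_j$; $A^*$ the formal adjoint with conormal derivative $\partial_{\nu_{A^*}}$. The function $d:\Omega\times\mathbb{R}\to\mathbb{R}$ is measurable in $x$, $C^2$ in $y$ for a.e. $x$, $\|d(\cdot,0)\|_\infty+\|d_y(\cdot,0)\|_\infty+\|d_{yy}(\cdot,0)\|_\infty<\infty$, $d_y\ge0$, $d_{yy}$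 Lipschitz in $y$ on bounded sets uniformly in $x$, and $d_y>0$ on $E_\Omega\times\mathbb{R}$ for some $E_\Omega$ of positive measure. $S(u)\in H^1(\Omega)\cap C(\bar\Omega)$ is the weak solution of $Ay+d(x,y)=u$ in $\Omega$, $\partial_{\nu_A}y=0$ on $\Gamma$. $f(u)=\frac12\|S(u)-y_d\|_{L^2}^2+\frac\alpha2\|u\|_{L^2}^2$. Problem (P): minimize $f(u)$ over $u\in U_{ad}$ with $S(u)\le\psi$ on $\bar\Omega$. $(\cdot)_+=\max(0,\cdot)$ pointwise; $(a,b)_+:=\int_\Omega\max(0,a(x)b(x))dx$. Augmented Lagrange sub-problem ($\rho>0$, $0\le\mu\in L^2$): minimize $f_{AL}(u)=f(u)+\frac1{2\rho}\int_\Omega((\mu+\rho(S(u)-\psi))_+)^2dx$ over $u\in U_{ad}$. Its optimality system: $(\bar y,\bar u,\bar p)$ with $\bar u\in U_{ad}$, $\bar y=S(\bar u)$, $\bar p\in H^1(\Omega)$ weak solution of $A^*\bar p+d_y(x,\bar y)\bar p=\bar y-y_d+(\mu+\rho(\bar y-\psi))_+$, $\partial_{\nu_{A^*}}\bar p=0$, and $(\bar p+\alpha\bar u,u-\bar u)\ge0$ for all $u\in U_{ad}$ (every global minimizer with its adjoint satisfies it). Algorithm: choose $\rho_1>0$, $0\le\mu_1\in L^2(\Omega)$, $\theta>1$, $\tau\in(0,1)$, $R_0^+>0$; $k=n=1$. Iteration $k$: (1) choose a solution $(\bar y_k,\bar u_k,\bar p_k)$ of the optimality system with $\mu=\mu_k,\rho=\rho_k$;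 (2) $\bar\mu_k:=(\mu_k+\rho_k(\bar y_k-\psi))_+$; (3) $R_k:=\|(\bar y_k-\psi)_+\|_{C(\bar\Omega)}+(\bar\mu_k,\psi-\bar y_k)_+$; (4) if $R_k\le\tau R^+_{n-1}$ the step is successful: $\mu_{k+1}:=\bar\mu_k$, $\rho_{k+1}:=\rho_k$, $R_n^+:=R_k$, $n:=n+1$; (5) otherwise $\mu_{k+1}:=\mu_k$, $\rho_{k+1}:=\theta\rho_k$; then $k:=k+1$ and repeat indefinitely. *)

theory Defs
  imports "HOL-Analysis.Analysis"
begin

type_synonym 'n fn = "real^'n \<Rightarrow> real"

definition L2 :: "(real^'n) set \<Rightarrow> 'n fn \<Rightarrow> bool" where
  "L2 \<Omega> f \<longleftrightarrow> f \<in> borel_measurable (lebesgue_on \<Omega>)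
      \<and> integrable (lebesgue_on \<Omega>) (\<lambda>x. (f x)^2)"

definition Linf :: "(real^'n) set \<Rightarrow> 'n fn \<Rightarrow> bool" where
  "Linf \<Omega> f \<longleftrightarrow> f \<in> borel_measurable (lebesgue_on \<Omega>)
      \<and> (\<exists>C. AE x in lebesgue_on \<Omega>. \<bar>f x\<bar> \<le> C)"

definition test_fun :: "(real^'n) set \<Rightarrow> 'n fn \<Rightarrow> (real^'n \<Rightarrow> real^'n) \<Rightarrow> bool" where
  "test_fun \<Omega> \<phi> D\<phi> \<longleftrightarrow> (\<forall>x. (\<phi> has_derivative (\<lambda>h. D\<phi> x \<bullet> h)) (at x))
      \<and> continuous_on UNIV D\<phi>
      \<and> (\<exists>K. compact K \<and> K \<subseteq> \<Omega> \<and> (\<forall>x. x \<notin> K \<longrightarrow> \<phi> x = 0))"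

definition weak_grad :: "(real^'n) set \<Rightarrow> 'n fn \<Rightarrow> (real^'n \<Rightarrow> real^'n) \<Rightarrow> bool" where
  "weak_grad \<Omega> y G \<longleftrightarrow> (\<forall>i. L2 \<Omega> (\<lambda>x. G x $ i))
      \<and> (\<forall>\<phi> D\<phi>. test_fun \<Omega> \<phi> D\<phi> \<longrightarrow>
           (\<forall>i. (\<integral>x. y x * D\<phi> x $ i \<partial>lebesgue_on \<Omega>)
                 = - (\<integral>x. G x $ i * \<phi> x \<partial>lebesgue_on \<Omega>)))"

definition H1 :: "(real^'n) set \<Rightarrow> 'n fn \<Rightarrow> bool" where
  "H1 \<Omega> y \<longleftrightarrow> L2 \<Omega> y \<and> (\<exists>G. weak_grad \<Omega> y G)"

text \<open>y is a weak solution of  A y + d(x,y) = u  in Omega,  conormal derivative = 0 on the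
  boundary, with A y = - sum_{i,j} d_j (a_ij d_i y) + a0 y.\<close>
definition weak_sol ::
  "(real^'n) set \<Rightarrow> ('n \<Rightarrow> 'n \<Rightarrow> 'n fn) \<Rightarrow> 'n fn \<Rightarrow> (real^'n \<Rightarrow> real \<Rightarrow> real)
     \<Rightarrow> 'n fn \<Rightarrow> 'n fn \<Rightarrow> bool" where
  "weak_sol \<Omega> a a0 d u y \<longleftrightarrow> H1 \<Omega> y \<and>
     (\<exists>G. weak_grad \<Omega> y G \<and>
        (\<forall>v Gv. H1 \<Omega> v \<and> weak_grad \<Omega> v Gv \<longrightarrow>
           (\<integral>x. (\<Sum>i\<in>UNIV. \<Sum>j\<in>UNIV. a i j x * G x $ i * Gv x $ j)
                 + a0 x * y x * v x + d x (y x) * v x \<partial>lebesgue_on \<Omega>)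
           = (\<integral>x. u x * v x \<partial>lebesgue_on \<Omega>)))"

definition is_state ::
  "(real^'n) set \<Rightarrow> ('n \<Rightarrow> 'n \<Rightarrow> 'n fn) \<Rightarrow> 'n fn \<Rightarrow> (real^'n \<Rightarrow> real \<Rightarrow> real)
     \<Rightarrow> 'n fn \<Rightarrow> 'n fn \<Rightarrow> bool" where
  "is_state \<Omega> a a0 d u y \<longleftrightarrow> continuous_on (closure \<Omega>) y \<and> weak_sol \<Omega> a a0 d u y"

definition Uad :: "(real^'n) set \<Rightarrow> 'n fn \<Rightarrow> 'n fn \<Rightarrow> 'n fn set" where
  "Uad \<Omega> ua ub = {u. Linf \<Omega> u \<and> (AE x in lebesgue_on \<Omega>. ua x \<le> u x \<and> u x \<le> ub x)}"

definition cost :: "(real^'n) set \<Rightarrow> 'n fn \<Rightarrow> real \<Rightarrow> 'n fn \<Rightarrow> 'n fn \<Rightarrow> real" where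
  "cost \<Omega> yd \<alpha> y u = 1/2 * (\<integral>x. (y x - yd x)^2 \<partial>lebesgue_on \<Omega>)
                     + \<alpha>/2 * (\<integral>x. (u x)^2 \<partial>lebesgue_on \<Omega>)"

definition cost_AL ::
  "(real^'n) set \<Rightarrow> 'n fn \<Rightarrow> real \<Rightarrow> 'n fn \<Rightarrow> 'n fn \<Rightarrow> real \<Rightarrow> 'n fn \<Rightarrow> 'n fn \<Rightarrow> real" where
  "cost_AL \<Omega> yd \<alpha> \<psi> \<mu> \<rho> y u = cost \<Omega> yd \<alpha> y u
     + 1/(2*\<rho>) * (\<integral>x. (max 0 (\<mu> x + \<rho> * (y x - \<psi> x)))^2 \<partial>lebesgue_on \<Omega>)"

definition mu_bar :: "'n fn \<Rightarrow> 'n fn \<Rightarrow> real \<Rightarrow> 'n fn \<Rightarrow> 'n fn" where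
  "mu_bar \<psi> \<mu> \<rho> y = (\<lambda>x. max 0 (\<mu> x + \<rho> * (y x - \<psi> x)))"

definition resid :: "(real^'n) set \<Rightarrow> 'n fn \<Rightarrow> 'n fn \<Rightarrow> 'n fn \<Rightarrow> real" where
  "resid \<Omega> \<psi> mb y = (SUP x\<in>closure \<Omega>. max 0 (y x - \<psi> x))
       + (\<integral>x. max 0 (mb x * (\<psi> x - y x)) \<partial>lebesgue_on \<Omega>)"

text \<open>Boundary of class C^{1,1}: locally the domain lies below the graph (in a unit
  direction e) of a C^1 function with Lipschitz derivative.\<close>
definition C11_boundary :: "(real^'n) set \<Rightarrow> bool" where
  "C11_boundary \<Omega> \<longleftrightarrow> (\<forall>x0\<in>frontier \<Omega>. \<exists>r>0. \<exists>e g g' L.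
      norm e = 1
      \<and> (\<forall>z t. g (z + t *\<^sub>R e) = g z)
      \<and> (\<forall>z. (g has_derivative g' z) (at z))
      \<and> (\<forall>z w h. \<bar>g' z h - g' w h\<bar> \<le> L * norm (z - w) * norm h)
      \<and> \<Omega> \<inter> ball x0 r = {z\<in>ball x0 r. z \<bullet> e < g z})"

end

theory Submission
  imports Defs
begin


lemma L2_add:
  assumes "L2 \<Omega> f" "L2 \<Omega> g" shows "L2 \<Omega> (\<lambda>x. f x + g x)"
proof -
  have m: "(\<lambda>x. f x + g x) \<in> borel_measurable (lebesgue_on \<Omega>)" using assms by (auto simp: L2_def)
  have i: "integrable (lebesgue_on \<Omega>) (\<lambda>x. 2 * (f x)^2 + 2 * (g x)^2)"
    using assms by (auto simp: L2_def)
  have "integrable (lebesgue_on \<Omega>) (\<lambda>x. (f x + g x)^2)"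
  proof (rule Bochner_Integration.integrable_bound[OF i])
    show "(\<lambda>x. (f x + g x)^2) \<in> borel_measurable (lebesgue_on \<Omega>)" using m by simp
    show "AE x in lebesgue_on \<Omega>. norm ((f x + g x)^2) \<le> norm (2 * (f x)^2 + 2 * (g x)^2)"
    proof (rule AE_I2)
      fix x
      have "(f x + g x)^2 \<le> 2 * (f x)^2 + 2 * (g x)^2"
        using sum_squares_ge_zero[of "f x - g x" 0] by (simp add: power2_eq_square algebra_simps)
      then show "norm ((f x + g x)^2) \<le> norm (2 * (f x)^2 + 2 * (g x)^2)" by simp
    qed
  qed
  then show ?thesis using m by (simp add: L2_def)
qed

lemma L2_cmult:
  assumes "L2 \<Omega> f" shows "L2 \<Omega> (\<lambda>x. c * f x)"
  using assms by (auto simp: L2_def power_mult_distrib)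

lemma L2_max0:
  assumes "L2 \<Omega> f" shows "L2 \<Omega> (\<lambda>x. max 0 (f x))"
proof -
  have m: "(\<lambda>x. max 0 (f x)) \<in> borel_measurable (lebesgue_on \<Omega>)" using assms by (auto simp: L2_def)
  have i: "integrable (lebesgue_on \<Omega>) (\<lambda>x. (f x)^2)" using assms by (auto simp: L2_def)
  have "integrable (lebesgue_on \<Omega>) (\<lambda>x. (max 0 (f x))^2)"
  proof (rule Bochner_Integration.integrable_bound[OF i])
    show "(\<lambda>x. (max 0 (f x))^2) \<in> borel_measurable (lebesgue_on \<Omega>)" using m by simp
    show "AE x in lebesgue_on \<Omega>. norm ((max 0 (f x))^2) \<le> norm ((f x)^2)"
      by (rule AE_I2) (simp add: max_def)
  qed
  then show ?thesis using m by (simp add: L2_def)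
qed

lemma L2_cont:
  assumes "open \<Omega>" "bounded \<Omega>" "continuous_on (closure \<Omega>) \<psi>"
  shows "L2 \<Omega> \<psi>"
proof -
  have S: "\<Omega> \<in> sets lebesgue" using assms(1) by simp
  have lm: "\<Omega> \<in> lmeasurable" using assms(2) S by (simp add: bounded_set_imp_lmeasurable)
  interpret finite_measure "lebesgue_on \<Omega>" using lm by (rule finite_measure_lebesgue_on)
  have c: "continuous_on \<Omega> \<psi>" using assms(3) closure_subset continuous_on_subset by blast
  have m: "\<psi> \<in> borel_measurable (lebesgue_on \<Omega>)"
    by (rule continuous_imp_measurable_on_sets_lebesgue[OF c S])
  have "compact (closure \<Omega>)" using assms(2) by (simp add: compact_closure)
  then have "bounded (\<psi> ` closure \<Omega>)" using assms(3) compact_continuous_image compact_imp_bounded by blast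
  then obtain B where B: "\<And>x. x \<in> closure \<Omega> \<Longrightarrow> \<bar>\<psi> x\<bar> \<le> B"
    unfolding bounded_iff by auto
  have "integrable (lebesgue_on \<Omega>) (\<lambda>x. (\<psi> x)^2)"
  proof (rule Bochner_Integration.integrable_bound[OF integrable_const[of "B^2"]])
    show "(\<lambda>x. (\<psi> x)^2) \<in> borel_measurable (lebesgue_on \<Omega>)" using m by simp
    show "AE x in lebesgue_on \<Omega>. norm ((\<psi> x)^2) \<le> norm (B^2)"
    proof (rule AE_I2)
      fix x assume "x \<in> space (lebesgue_on \<Omega>)"
      then have "x \<in> closure \<Omega>" using closure_subset by auto
      then have "\<bar>\<psi> x\<bar> \<le> B" by (rule B)
      then have "\<bar>\<psi> x\<bar>^2 \<le> B^2" by (intro power_mono) auto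
      then show "norm ((\<psi> x)^2) \<le> norm (B^2)" by simp
    qed
  qed
  then show ?thesis using m by (simp add: L2_def)
qed


theorem lemma4p5:
  fixes \<Omega> :: "(real^'n) set"
    and a :: "'n \<Rightarrow> 'n \<Rightarrow> real^'n \<Rightarrow> real" and a0 :: "real^'n \<Rightarrow> real" and \<delta> :: real
    and d dy dyy :: "real^'n \<Rightarrow> real \<Rightarrow> real" and E :: "(real^'n) set"
    and yd \<psi> ua ub :: "real^'n \<Rightarrow> real" and \<alpha> \<theta> \<tau> R0 :: real
    and \<mu> :: "nat \<Rightarrow> real^'n \<Rightarrow> real" and \<rho> :: "nat \<Rightarrow> real" and Rp :: "nat \<Rightarrow> real"
    and ybar ubar :: "nat \<Rightarrow> real^'n \<Rightarrow> real"
  assumes dim: "CARD('n) = 2 \<or> CARD('n) = 3"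
    and dom: "open \<Omega>" "connected \<Omega>" "bounded \<Omega>" "\<Omega> \<noteq> {}"
    and bdry: "C11_boundary \<Omega> \<or> (convex \<Omega> \<and> (\<exists>P. polytope P \<and> \<Omega> = interior P))"
    and a_lip: "\<forall>i j. \<exists>L. L-lipschitz_on (closure \<Omega>) (a i j)"
    and a_ell: "\<delta> > 0" "\<forall>x\<in>\<Omega>. \<forall>\<xi>::real^'n.
                  (\<Sum>i\<in>UNIV. \<Sum>j\<in>UNIV. a i j x * \<xi> $ i * \<xi> $ j) \<ge> \<delta> * (norm \<xi>)^2"
    and a0: "Linf \<Omega> a0" "AE x in lebesgue_on \<Omega>. a0 x \<ge> 0"
            "\<not> (AE x in lebesgue_on \<Omega>. a0 x = 0)"
    and d_meas: "\<forall>t. (\<lambda>x. d x t) \<in> borel_measurable (lebesgue_on \<Omega>)"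
    and d_C2: "AE x in lebesgue_on \<Omega>. (\<forall>t. (d x has_real_derivative dy x t) (at t)
                   \<and> (dy x has_real_derivative dyy x t) (at t)) \<and> continuous_on UNIV (dyy x)"
    and d_bd: "\<exists>C. AE x in lebesgue_on \<Omega>. \<bar>d x 0\<bar> + \<bar>dy x 0\<bar> + \<bar>dyy x 0\<bar> \<le> C"
    and dy_nonneg: "AE x in lebesgue_on \<Omega>. \<forall>t. dy x t \<ge> 0"
    and dyy_lip: "\<forall>M. \<exists>L. AE x in lebesgue_on \<Omega>. \<forall>s t. \<bar>s\<bar> \<le> M \<and> \<bar>t\<bar> \<le> M
                    \<longrightarrow> \<bar>dyy x s - dyy x t\<bar> \<le> L * \<bar>s - t\<bar>"
    and E: "E \<subseteq> \<Omega>" "E \<in> sets lebesgue" "emeasure lebesgue E > 0" "\<forall>x\<in>E. \<forall>t. dy x t > 0"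
    and yd: "L2 \<Omega> yd"
    and psi: "continuous_on (closure \<Omega>) \<psi>"
    and alpha: "\<alpha> > 0"
    and uab: "Linf \<Omega> ua" "Linf \<Omega> ub" "AE x in lebesgue_on \<Omega>. ua x \<le> ub x"
    and feasible: "\<exists>u y. u \<in> Uad \<Omega> ua ub \<and> is_state \<Omega> a a0 d u y \<and> (\<forall>x\<in>closure \<Omega>. y x \<le> \<psi> x)"
    and params: "\<rho> 1 > 0" "L2 \<Omega> (\<mu> 1)" "AE x in lebesgue_on \<Omega>. \<mu> 1 x \<ge> 0"
                "\<theta> > 1" "0 < \<tau>" "\<tau> < 1" "R0 > 0" "Rp 1 = R0"
    and glob_min: "\<forall>k\<ge>1. ubar k \<in> Uad \<Omega> ua ub \<and> is_state \<Omega> a a0 d (ubar k) (ybar k)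
                   \<and> (\<forall>u y. u \<in> Uad \<Omega> ua ub \<and> is_state \<Omega> a a0 d u y \<longrightarrow>
                        cost_AL \<Omega> yd \<alpha> \<psi> (\<mu> k) (\<rho> k) (ybar k) (ubar k)
                          \<le> cost_AL \<Omega> yd \<alpha> \<psi> (\<mu> k) (\<rho> k) y u)"
    and update: "\<forall>k\<ge>1.
        (let mb = mu_bar \<psi> (\<mu> k) (\<rho> k) (ybar k);
             R = resid \<Omega> \<psi> mb (ybar k);
             succ = (R \<le> \<tau> * Rp k)
         in \<mu> (Suc k) = (if succ then mb else \<mu> k)
          \<and> \<rho> (Suc k) = (if succ then \<rho> k else \<theta> * \<rho> k)
          \<and> Rp (Suc k) = (if succ then R else Rp k))"
    and finitely_many_succ: "finite {k. k \<ge> 1 \<and>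
        resid \<Omega> \<psi> (mu_bar \<psi> (\<mu> k) (\<rho> k) (ybar k)) (ybar k) \<le> \<tau> * Rp k}"
  shows "\<exists>C. \<forall>k\<ge>1. 1 / \<rho> k *
           (\<integral>x. (max 0 (\<mu> k x + \<rho> k * (ybar k x - \<psi> x)))^2 \<partial>lebesgue_on \<Omega>) \<le> C"
proof -
  obtain us ys where us: "us \<in> Uad \<Omega> ua ub" "is_state \<Omega> a a0 d us ys"
      "\<forall>x\<in>closure \<Omega>. ys x \<le> \<psi> x" using feasible by blast
  define S where "S = {k. k \<ge> 1 \<and>
        resid \<Omega> \<psi> (mu_bar \<psi> (\<mu> k) (\<rho> k) (ybar k)) (ybar k) \<le> \<tau> * Rp k}"
  have finS: "finite S" using finitely_many_succ by (simp add: S_def)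
  define K0 where "K0 = Suc (Max (insert 1 S))"
  have K0: "K0 \<ge> 1" by (simp add: K0_def)
  have notS: "k \<notin> S" if "k \<ge> K0" for k
  proof
    assume "k \<in> S"
    then have "k \<le> Max (insert 1 S)" using finS by simp
    then show False using that by (simp add: K0_def)
  qed
  have psiL2: "L2 \<Omega> \<psi>" using L2_cont[OF dom(1) dom(3) psi] .
  have ybL2: "L2 \<Omega> (ybar k)" if "k \<ge> 1" for k
  proof -
    have "is_state \<Omega> a a0 d (ubar k) (ybar k)" using glob_min that by blast
    then show ?thesis by (simp add: is_state_def weak_sol_def H1_def)
  qed
  have inv: "L2 \<Omega> (\<mu> k) \<and> \<rho> k > 0" if "k \<ge> 1" for k
    using that
  proof (induction k rule: dec_induct)
    case base
    then show ?case using params by simp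
  next
    case (step k)
    have upd: "\<mu> (Suc k) = (if k \<in> S then mu_bar \<psi> (\<mu> k) (\<rho> k) (ybar k) else \<mu> k)
          \<and> \<rho> (Suc k) = (if k \<in> S then \<rho> k else \<theta> * \<rho> k)"
    proof -
      have u: "let mb = mu_bar \<psi> (\<mu> k) (\<rho> k) (ybar k);
             R = resid \<Omega> \<psi> mb (ybar k);
             succ = (R \<le> \<tau> * Rp k)
         in \<mu> (Suc k) = (if succ then mb else \<mu> k)
          \<and> \<rho> (Suc k) = (if succ then \<rho> k else \<theta> * \<rho> k)
          \<and> Rp (Suc k) = (if succ then R else Rp k)" using update step(1) by blast
      have memS: "(k \<in> S) = (resid \<Omega> \<psi> (mu_bar \<psi> (\<mu> k) (\<rho> k) (ybar k)) (ybar k) \<le> \<tau> * Rp k)"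
        using step(1) by (simp add: S_def)
      show ?thesis using u unfolding Let_def memS[symmetric] by simp
    qed
    have "L2 \<Omega> (mu_bar \<psi> (\<mu> k) (\<rho> k) (ybar k))"
      unfolding mu_bar_def
      apply (rule L2_max0)
      apply (rule L2_add)
       apply (simp add: step(3))
      apply (rule L2_cmult)
      using L2_add[OF ybL2[OF step(1)] L2_cmult[OF psiL2, of "-1"]] by simp
    moreover have "\<theta> * \<rho> k > 0" using step(3) params(4) by simp
    ultimately show ?case using upd step(3) by auto
  qed
  have late: "\<mu> k = \<mu> K0 \<and> \<rho> K0 \<le> \<rho> k" if "k \<ge> K0" for k
    using that
  proof (induction k rule: dec_induct)
    case base
    then show ?case by simp
  next
    case (step k)
    have k1: "k \<ge> 1" using step(1) K0 by simp
    have "k \<notin> S" using notS step(1) by simp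
    then have upd: "\<mu> (Suc k) = \<mu> k \<and> \<rho> (Suc k) = \<theta> * \<rho> k"
    proof -
      have u: "let mb = mu_bar \<psi> (\<mu> k) (\<rho> k) (ybar k);
             R = resid \<Omega> \<psi> mb (ybar k);
             succ = (R \<le> \<tau> * Rp k)
         in \<mu> (Suc k) = (if succ then mb else \<mu> k)
          \<and> \<rho> (Suc k) = (if succ then \<rho> k else \<theta> * \<rho> k)
          \<and> Rp (Suc k) = (if succ then R else Rp k)" using update k1 by blast
      have memS: "(k \<in> S) = (resid \<Omega> \<psi> (mu_bar \<psi> (\<mu> k) (\<rho> k) (ybar k)) (ybar k) \<le> \<tau> * Rp k)"
        using k1 by (simp add: S_def)
      show ?thesis using u \<open>k \<notin> S\<close> unfolding Let_def memS[symmetric] by simp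
    qed
    have "\<rho> k \<le> \<theta> * \<rho> k" using inv[OF k1] params(4) by simp
    then show ?case using upd step(3) by auto
  qed
  define M where "M k = (\<integral>x. (\<mu> k x)^2 \<partial>lebesgue_on \<Omega>)" for k
  define cs where "cs = cost \<Omega> yd \<alpha> ys us"
  have M0: "M k \<ge> 0" for k unfolding M_def by (rule integral_nonneg_AE) simp
  have main: "1 / \<rho> k * (\<integral>x. (max 0 (\<mu> k x + \<rho> k * (ybar k x - \<psi> x)))^2 \<partial>lebesgue_on \<Omega>)
      \<le> 2 * cs + M k / \<rho> k" if k1: "k \<ge> 1" for k
  proof -
    have rk: "\<rho> k > 0" using inv[OF k1] by simp
    have muL2: "L2 \<Omega> (\<mu> k)" using inv[OF k1] by simp
    define P where "P = (\<integral>x. (max 0 (\<mu> k x + \<rho> k * (ybar k x - \<psi> x)))^2 \<partial>lebesgue_on \<Omega>)"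
    define Q where "Q = (\<integral>x. (max 0 (\<mu> k x + \<rho> k * (ys x - \<psi> x)))^2 \<partial>lebesgue_on \<Omega>)"
    have le: "cost_AL \<Omega> yd \<alpha> \<psi> (\<mu> k) (\<rho> k) (ybar k) (ubar k)
                          \<le> cost_AL \<Omega> yd \<alpha> \<psi> (\<mu> k) (\<rho> k) ys us"
    proof -
      have gk: "\<forall>u y. u \<in> Uad \<Omega> ua ub \<and> is_state \<Omega> a a0 d u y \<longrightarrow>
                        cost_AL \<Omega> yd \<alpha> \<psi> (\<mu> k) (\<rho> k) (ybar k) (ubar k)
                          \<le> cost_AL \<Omega> yd \<alpha> \<psi> (\<mu> k) (\<rho> k) y u"
        using glob_min k1 by blast
      show ?thesis using gk us(1) us(2) by blast
    qed
    have c0: "cost \<Omega> yd \<alpha> (ybar k) (ubar k) \<ge> 0"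
    proof -
      have "(\<integral>x. (ybar k x - yd x)^2 \<partial>lebesgue_on \<Omega>) \<ge> 0" by (rule integral_nonneg_AE) simp
      moreover have "(\<integral>x. (ubar k x)^2 \<partial>lebesgue_on \<Omega>) \<ge> 0" by (rule integral_nonneg_AE) simp
      ultimately show ?thesis unfolding cost_def using alpha by simp
    qed
    have pw: "(max 0 (\<mu> k x + \<rho> k * (ys x - \<psi> x)))^2 \<le> (\<mu> k x)^2" if "x \<in> \<Omega>" for x
    proof -
      have "ys x \<le> \<psi> x" using us(3) that closure_subset by auto
      then have "\<rho> k * (ys x - \<psi> x) \<le> 0" using rk by (simp add: mult_nonneg_nonpos)
      then have "max 0 (\<mu> k x + \<rho> k * (ys x - \<psi> x)) \<le> \<bar>\<mu> k x\<bar>" by simp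
      then have "(max 0 (\<mu> k x + \<rho> k * (ys x - \<psi> x)))^2 \<le> \<bar>\<mu> k x\<bar>^2"
        by (intro power_mono) auto
      then show ?thesis by simp
    qed
    have QM: "Q \<le> M k"
    proof (cases "integrable (lebesgue_on \<Omega>) (\<lambda>x. (max 0 (\<mu> k x + \<rho> k * (ys x - \<psi> x)))^2)")
      case True
      have "integrable (lebesgue_on \<Omega>) (\<lambda>x. (\<mu> k x)^2)" using muL2 by (simp add: L2_def)
      then show ?thesis unfolding Q_def M_def
        by (intro integral_mono[OF True]) (auto intro: pw)
    next
      case False
      then show ?thesis unfolding Q_def using M0 by (simp add: not_integrable_integral_eq)
    qed
    have "1/(2*\<rho> k) * P \<le> cs + 1/(2*\<rho> k) * Q"
      using le c0 unfolding cost_AL_def P_def Q_def cs_def by linarith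
    also have "1/(2*\<rho> k) * Q \<le> 1/(2*\<rho> k) * M k"
      using QM rk by (intro mult_left_mono) auto
    finally have "1/(2*\<rho> k) * P \<le> cs + 1/(2*\<rho> k) * M k" by simp
    then have "2 * (1/(2*\<rho> k) * P) \<le> 2 * (cs + 1/(2*\<rho> k) * M k)" by simp
    then show ?thesis unfolding P_def[symmetric] by (simp add: algebra_simps)
  qed
  define B where "B = Max ((\<lambda>k. M k / \<rho> k) ` {1..K0})"
  have Bb: "M k / \<rho> k \<le> B" if "k \<ge> 1" for k
  proof (cases "k \<le> K0")
    case True
    have "k \<in> {1..K0}" using True that by simp
    then have "M k / \<rho> k \<in> (\<lambda>k. M k / \<rho> k) ` {1..K0}" by (rule imageI)
    then show ?thesis unfolding B_def by (rule Max_ge[rotated]) simp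
  next
    case False
    then have "K0 \<le> k" by simp
    then have l: "\<mu> k = \<mu> K0 \<and> \<rho> K0 \<le> \<rho> k" by (rule late)
    then have e: "M k = M K0" unfolding M_def by simp
    have r: "\<rho> K0 \<le> \<rho> k" using l by simp
    have p: "\<rho> K0 > 0" using inv[OF K0] by simp
    have "M K0 / \<rho> k \<le> M K0 / \<rho> K0"
      by (rule divide_left_mono[OF r M0]) (use p r in simp)
    then have "M k / \<rho> k \<le> M K0 / \<rho> K0" using e by simp
    also have "\<dots> \<le> B"
    proof -
      have "K0 \<in> {1..K0}" using K0 by simp
      then have "M K0 / \<rho> K0 \<in> (\<lambda>k. M k / \<rho> k) ` {1..K0}" by (rule imageI)
      then show ?thesis unfolding B_def by (rule Max_ge[rotated]) simp
    qed
    finally show ?thesis .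
  qed
  show ?thesis
  proof (intro exI allI impI)
    fix k :: nat assume k: "k \<ge> 1"
    show "1 / \<rho> k * (\<integral>x. (max 0 (\<mu> k x + \<rho> k * (ybar k x - \<psi> x)))^2 \<partial>lebesgue_on \<Omega>)
        \<le> 2 * cs + B" using main[OF k] add_left_mono[OF Bb[OF k], of "2 * cs"] by (rule order_trans)
  qed
qed

end
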